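(* Let $0\to V\to\widehat A\xrightarrow{j}A\to0$ be an abelian extension of a Com-PreLie algebra $A$ by a representation $(V,\mu,l,r)$ inducing that representation. Then there is an exact sequence $$0\longrightarrow\mathcal Z^1(A,V)\xrightarrow{\ \iota\ }\mathrm{Aut}_V(\widehat A)\xrightarrow{\ \tau\ }\mathcal C\xrightarrow{\ \mathcal W\ }\mathcal H^2(A,V),$$ where $\iota$ is the injective group homomorphism obtained by composing the isomorphism $\mathcal Z^1(A,V)\cong\mathrm{Aut}^A_V(\widehat A)$ (inverse of $\gamma\mapsto\gamma s-s$) with the inclusion $\mathrm{Aut}^A_V(\widehat A)\subseteq\mathrm{Aut}_V(\widehat A)$. Exactness means: $\iota$ is injective; $\tau$ takes values in $\mathcal C$ and $\ker\tau=\iota(\mathcal Z^1(A,V))$; and $\tau(\mathrm{Aut}_V(\widehat A))=\{(\beta,\alpha)\in\mathcal C:\mathcal W(\beta,\alpha)=0\}$.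
   Context: All vector spaces are over a field of characteristic $0$. A Com-PreLie algebra is a triple $(A,\ast,\bullet)$ where $A$ is a vector space, $\ast$ is a commutative associative bilinear product on $A$, and $\bullet$ is a bilinear product on $A$ satisfying the left pre-Lie identity $(x\bullet y)\bullet z-x\bullet(y\bullet z)=(y\bullet x)\bullet z-y\bullet(x\bullet z)$ and the compatibility $x\bullet(y\ast z)=(x\bullet y)\ast z+y\ast(x\bullet z)$ for all $x,y,z\in A$. A homomorphism of Com-PreLie algebras is a linear map preserving both products. A representation of $A$ is a quadruple $(V,\mu,l,r)$ with $V$ a vector space and $\mu,l,r:A\to\mathrm{End}(V)$ linear maps satisfying, for all $x,y\in A$: $\mu(x\ast y)=\mu(x)\mu(y)$; $l(x\bullet y)-l(x)l(y)=l(y\bullet x)-l(y)l(x)$; $r(y)l(x)-l(x)r(y)=r(y)r(x)-r(x\bullet y)$; $l(x)\mu(y)=\mu(x\bullet y)+\mu(y)l(x)$; $r(x\ast y)=\mu(y)r(x)+\mu(x)r(y)$. A 2-cocycle of $A$ with coefficients in $V$ is a pair $(\phi,\psi)$ of bilinear maps $A\times A\to V$, with $\phi$ symmetric, such that for all $x,y,z\in A$: (C1) $\phi(x,y\ast z)+\mu(x)\phi(y,z)-\phi(x\ast y,z)-\mu(z)\phi(x,y)=0$; (C2) $\psi(x\bullet y,z)+r(z)\psi(x,y)-\psi(x,y\bullet z)-l(x)\psi(y,z)-\psi(y\bullet x,z)-r(z)\psi(y,x)+\psi(y,x\bullet z)+l(y)\psi(x,z)=0$; (C3) $\psi(x,y\ast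 z)+l(x)\phi(y,z)-\phi(x\bullet y,z)-\mu(z)\psi(x,y)-\phi(y,x\bullet z)-\mu(y)\psi(x,z)=0$. A 2-coboundary is a pair $(x,y)\mapsto(\mu(x)f(y)-f(x\ast y)+\mu(y)f(x),\ l(x)f(y)-f(x\bullet y)+r(y)f(x))$ for a linear $f:A\to V$; $\mathcal H^2(A,V)$ is the quotient of the space of 2-cocycles by the subspace of 2-coboundaries. $\mathcal Z^1(A,V)$ is the additive group of linear maps $N:A\to V$ with $\mu(x)N(y)-N(x\ast y)+\mu(y)N(x)=0$ and $l(x)N(y)-N(x\bullet y)+r(y)N(x)=0$ for all $x,y$. An abelian extension of $A$ by $V$ is a Com-PreLie algebra $(\widehat A,\ast_{\widehat A},\bullet_{\widehat A})$ with a short exact sequence $0\to V\xrightarrow{i}\widehat A\xrightarrow{j}A\to0$ of Com-PreLie algebra homomorphisms, $V$ carrying the zero products; $V$ is identified with $i(V)=\ker j$. It induces the given representation if for any linear section $s$ of $j$ ($j\circ s=\mathrm{id}_A$): $\mu(x)u=s(x)\ast_{\widehat A}u$, $l(x)u=s(x)\bullet_{\widehat A}u$, $r(x)u=u\bullet_{\widehat A}s(x)$. Fix such a section $s$ and let $(\phi,\psi)$ be the 2-cocycle $\phi(x,y)=s(x)\ast_{\widehat A}s(y)-s(x\ast y)$, $\psi(x,y)=s(x)\bullet_{\widehat A}s(y)-s(x\bullet y)$. $\mathrm{Aut}(A)$ is the group of Com-PreLie algebra automorphisms of $A$; $\mathrm{Aut}(V)$ is the group of linear automorphisms of $V$; $\mathrm{Aut}_V(\widehat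 A)$ is the group of Com-PreLie algebra automorphisms $\gamma$ of $\widehat A$ with $\gamma(V)=V$, and $\mathrm{Aut}^A_V(\widehat A)$ its subgroup of those with $\gamma|_V=\mathrm{id}_V$ and $j\gamma s=\mathrm{id}_A$. The map $\tau:\mathrm{Aut}_V(\widehat A)\to\mathrm{Aut}(V)\times\mathrm{Aut}(A)$ is $\tau(\gamma)=(\gamma|_V,j\gamma s)$. $\mathcal C$ is the group of pairs $(\beta,\alpha)\in\mathrm{Aut}(V)\times\mathrm{Aut}(A)$ with $\beta(\mu(x)u)=\mu(\alpha(x))\beta(u)$, $\beta(l(x)u)=l(\alpha(x))\beta(u)$, $\beta(r(x)u)=r(\alpha(x))\beta(u)$ for all $x\in A,u\in V$. For $(\beta,\alpha)\in\mathcal C$, $(\phi,\psi)^{(\beta,\alpha)}$ is the 2-cocycle $(x,y)\mapsto\big(\beta\phi(\alpha^{-1}x,\alpha^{-1}y),\ \beta\psi(\alpha^{-1}x,\alpha^{-1}y)\big)$, and the Wells map is $\mathcal W(\beta,\alpha)=\big[(\phi,\psi)^{(\beta,\alpha)}-(\phi,\psi)\big]\in\mathcal H^2(A,V)$ (independent of $s$). *)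

theory Defs
  imports Complex_Main
begin

text \<open>Vector spaces over a field 'k of characteristic 0 are modelled as whole types
  of class ab_group_add together with a scalar multiplication satisfying the
  vector_space locale predicate.\<close>

definition lin :: "('k::field \<Rightarrow> 'a::ab_group_add \<Rightarrow> 'a) \<Rightarrow> ('k \<Rightarrow> 'b::ab_group_add \<Rightarrow> 'b) \<Rightarrow> ('a \<Rightarrow> 'b) \<Rightarrow> bool"
  where "lin s1 s2 f \<longleftrightarrow> Vector_Spaces.linear s1 s2 f"

definition bilin ::
  "('k::field \<Rightarrow> 'a::ab_group_add \<Rightarrow> 'a) \<Rightarrow> ('k \<Rightarrow> 'b::ab_group_add \<Rightarrow> 'b) \<Rightarrow> ('k \<Rightarrow> 'c::ab_group_add \<Rightarrow> 'c)
    \<Rightarrow> ('a \<Rightarrow> 'b \<Rightarrow> 'c) \<Rightarrow> bool"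
  where "bilin s1 s2 s3 f \<longleftrightarrow> (\<forall>x. lin s2 s3 (f x)) \<and> (\<forall>y. lin s1 s3 (\<lambda>x. f x y))"

definition com_prelie :: "('k::field \<Rightarrow> 'a::ab_group_add \<Rightarrow> 'a) \<Rightarrow> ('a \<Rightarrow> 'a \<Rightarrow> 'a) \<Rightarrow> ('a \<Rightarrow> 'a \<Rightarrow> 'a) \<Rightarrow> bool"
  where "com_prelie s mul pl \<longleftrightarrow>
     vector_space s \<and> bilin s s s mul \<and> bilin s s s pl
     \<and> (\<forall>x y. mul x y = mul y x)
     \<and> (\<forall>x y z. mul (mul x y) z = mul x (mul y z))
     \<and> (\<forall>x y z. pl (pl x y) z - pl x (pl y z) = pl (pl y x) z - pl y (pl x z))
     \<and> (\<forall>x y z. pl x (mul y z) = mul (pl x y) z + mul y (pl x z))"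

definition com_prelie_hom ::
  "('k::field \<Rightarrow> 'a::ab_group_add \<Rightarrow> 'a) \<Rightarrow> ('a \<Rightarrow> 'a \<Rightarrow> 'a) \<Rightarrow> ('a \<Rightarrow> 'a \<Rightarrow> 'a)
   \<Rightarrow> ('k \<Rightarrow> 'b::ab_group_add \<Rightarrow> 'b) \<Rightarrow> ('b \<Rightarrow> 'b \<Rightarrow> 'b) \<Rightarrow> ('b \<Rightarrow> 'b \<Rightarrow> 'b) \<Rightarrow> ('a \<Rightarrow> 'b) \<Rightarrow> bool"
  where "com_prelie_hom s1 m1 p1 s2 m2 p2 f \<longleftrightarrow>
     lin s1 s2 f \<and> (\<forall>x y. f (m1 x y) = m2 (f x) (f y)) \<and> (\<forall>x y. f (p1 x y) = p2 (f x) (f y))"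

definition com_prelie_auts :: "('k::field \<Rightarrow> 'a::ab_group_add \<Rightarrow> 'a) \<Rightarrow> ('a \<Rightarrow> 'a \<Rightarrow> 'a) \<Rightarrow> ('a \<Rightarrow> 'a \<Rightarrow> 'a) \<Rightarrow> ('a \<Rightarrow> 'a) set"
  where "com_prelie_auts s m p = {g. com_prelie_hom s m p s m p g \<and> bij g}"

definition lin_auts :: "('k::field \<Rightarrow> 'v::ab_group_add \<Rightarrow> 'v) \<Rightarrow> ('v \<Rightarrow> 'v) set"
  where "lin_auts s = {b. lin s s b \<and> bij b}"

definition is_rep ::
  "('k::field \<Rightarrow> 'a::ab_group_add \<Rightarrow> 'a) \<Rightarrow> ('a \<Rightarrow> 'a \<Rightarrow> 'a) \<Rightarrow> ('a \<Rightarrow> 'a \<Rightarrow> 'a)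
   \<Rightarrow> ('k \<Rightarrow> 'v::ab_group_add \<Rightarrow> 'v) \<Rightarrow> ('a \<Rightarrow> 'v \<Rightarrow> 'v) \<Rightarrow> ('a \<Rightarrow> 'v \<Rightarrow> 'v) \<Rightarrow> ('a \<Rightarrow> 'v \<Rightarrow> 'v) \<Rightarrow> bool"
  where "is_rep sA mA pA sV \<mu> l r \<longleftrightarrow>
     vector_space sV \<and> bilin sA sV sV \<mu> \<and> bilin sA sV sV l \<and> bilin sA sV sV r
     \<and> (\<forall>x y u. \<mu> (mA x y) u = \<mu> x (\<mu> y u))
     \<and> (\<forall>x y u. l (pA x y) u - l x (l y u) = l (pA y x) u - l y (l x u))
     \<and> (\<forall>x y u. r y (l x u) - l x (r y u) = r y (r x u) - r (pA x y) u)
     \<and> (\<forall>x y u. l x (\<mu> y u) = \<mu> (pA x y) u + \<mu> y (l x u))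
     \<and> (\<forall>x y u. r (mA x y) u = \<mu> y (r x u) + \<mu> x (r y u))"

definition abelian_extension ::
  "('k::field \<Rightarrow> 'a::ab_group_add \<Rightarrow> 'a) \<Rightarrow> ('a \<Rightarrow> 'a \<Rightarrow> 'a) \<Rightarrow> ('a \<Rightarrow> 'a \<Rightarrow> 'a)
   \<Rightarrow> ('k \<Rightarrow> 'v::ab_group_add \<Rightarrow> 'v)
   \<Rightarrow> ('k \<Rightarrow> 'h::ab_group_add \<Rightarrow> 'h) \<Rightarrow> ('h \<Rightarrow> 'h \<Rightarrow> 'h) \<Rightarrow> ('h \<Rightarrow> 'h \<Rightarrow> 'h)
   \<Rightarrow> ('v \<Rightarrow> 'h) \<Rightarrow> ('h \<Rightarrow> 'a) \<Rightarrow> bool"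
  where "abelian_extension sA mA pA sV sH mH pH i j \<longleftrightarrow>
     com_prelie sA mA pA \<and> com_prelie sH mH pH \<and> com_prelie sV (\<lambda>_ _. 0) (\<lambda>_ _. 0)
     \<and> com_prelie_hom sV (\<lambda>_ _. 0) (\<lambda>_ _. 0) sH mH pH i
     \<and> com_prelie_hom sH mH pH sA mA pA j
     \<and> inj i \<and> surj j \<and> range i = {h. j h = 0}"

definition lin_section ::
  "('k::field \<Rightarrow> 'a::ab_group_add \<Rightarrow> 'a) \<Rightarrow> ('k \<Rightarrow> 'h::ab_group_add \<Rightarrow> 'h) \<Rightarrow> ('h \<Rightarrow> 'a) \<Rightarrow> ('a \<Rightarrow> 'h) \<Rightarrow> bool"
  where "lin_section sA sH j s \<longleftrightarrow> lin sA sH s \<and> (\<forall>x. j (s x) = x)"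

definition induces_rep ::
  "('k::field \<Rightarrow> 'a::ab_group_add \<Rightarrow> 'a) \<Rightarrow> ('k \<Rightarrow> 'h::ab_group_add \<Rightarrow> 'h) \<Rightarrow> ('h \<Rightarrow> 'h \<Rightarrow> 'h) \<Rightarrow> ('h \<Rightarrow> 'h \<Rightarrow> 'h)
   \<Rightarrow> ('v::ab_group_add \<Rightarrow> 'h) \<Rightarrow> ('h \<Rightarrow> 'a)
   \<Rightarrow> ('a \<Rightarrow> 'v \<Rightarrow> 'v) \<Rightarrow> ('a \<Rightarrow> 'v \<Rightarrow> 'v) \<Rightarrow> ('a \<Rightarrow> 'v \<Rightarrow> 'v) \<Rightarrow> bool"
  where "induces_rep sA sH mH pH i j \<mu> l r \<longleftrightarrow>
     (\<forall>s. lin_section sA sH j s \<longrightarrow>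
        (\<forall>x u. i (\<mu> x u) = mH (s x) (i u) \<and> i (l x u) = pH (s x) (i u) \<and> i (r x u) = pH (i u) (s x)))"

definition Z1 ::
  "('k::field \<Rightarrow> 'a::ab_group_add \<Rightarrow> 'a) \<Rightarrow> ('a \<Rightarrow> 'a \<Rightarrow> 'a) \<Rightarrow> ('a \<Rightarrow> 'a \<Rightarrow> 'a)
   \<Rightarrow> ('k \<Rightarrow> 'v::ab_group_add \<Rightarrow> 'v) \<Rightarrow> ('a \<Rightarrow> 'v \<Rightarrow> 'v) \<Rightarrow> ('a \<Rightarrow> 'v \<Rightarrow> 'v) \<Rightarrow> ('a \<Rightarrow> 'v \<Rightarrow> 'v) \<Rightarrow> ('a \<Rightarrow> 'v) set"
  where "Z1 sA mA pA sV \<mu> l r = {N. lin sA sV N \<and>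
     (\<forall>x y. \<mu> x (N y) - N (mA x y) + \<mu> y (N x) = 0) \<and>
     (\<forall>x y. l x (N y) - N (pA x y) + r y (N x) = 0)}"

definition autV :: "('k::field \<Rightarrow> 'h::ab_group_add \<Rightarrow> 'h) \<Rightarrow> ('h \<Rightarrow> 'h \<Rightarrow> 'h) \<Rightarrow> ('h \<Rightarrow> 'h \<Rightarrow> 'h) \<Rightarrow> ('v \<Rightarrow> 'h) \<Rightarrow> ('h \<Rightarrow> 'h) set"
  where "autV sH mH pH i = {g \<in> com_prelie_auts sH mH pH. g ` range i = range i}"

definition restrV :: "('v \<Rightarrow> 'h) \<Rightarrow> ('h \<Rightarrow> 'h) \<Rightarrow> 'v \<Rightarrow> 'v"
  where "restrV i g = (\<lambda>u. inv i (g (i u)))"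

definition autVA :: "('k::field \<Rightarrow> 'h::ab_group_add \<Rightarrow> 'h) \<Rightarrow> ('h \<Rightarrow> 'h \<Rightarrow> 'h) \<Rightarrow> ('h \<Rightarrow> 'h \<Rightarrow> 'h) \<Rightarrow> ('v \<Rightarrow> 'h)
    \<Rightarrow> ('h \<Rightarrow> 'a) \<Rightarrow> ('a \<Rightarrow> 'h) \<Rightarrow> ('h \<Rightarrow> 'h) set"
  where "autVA sH mH pH i j s = {g \<in> autV sH mH pH i. restrV i g = id \<and> (\<lambda>x. j (g (s x))) = id}"

definition tau :: "('v \<Rightarrow> 'h) \<Rightarrow> ('h \<Rightarrow> 'a) \<Rightarrow> ('a \<Rightarrow> 'h) \<Rightarrow> ('h \<Rightarrow> 'h) \<Rightarrow> ('v \<Rightarrow> 'v) \<times> ('a \<Rightarrow> 'a)"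
  where "tau i j s g = (restrV i g, \<lambda>x. j (g (s x)))"

text \<open>iota(N) = the unique gamma in Aut^A_V with gamma s - s = N, namely h |-> h + N(j h).\<close>
definition iota :: "('v \<Rightarrow> 'h::ab_group_add) \<Rightarrow> ('h \<Rightarrow> 'a) \<Rightarrow> ('a \<Rightarrow> 'v) \<Rightarrow> 'h \<Rightarrow> 'h"
  where "iota i j N = (\<lambda>h. h + i (N (j h)))"

definition compat_pairs ::
  "('k::field \<Rightarrow> 'a::ab_group_add \<Rightarrow> 'a) \<Rightarrow> ('a \<Rightarrow> 'a \<Rightarrow> 'a) \<Rightarrow> ('a \<Rightarrow> 'a \<Rightarrow> 'a)
   \<Rightarrow> ('k \<Rightarrow> 'v::ab_group_add \<Rightarrow> 'v) \<Rightarrow> ('a \<Rightarrow> 'v \<Rightarrow> 'v) \<Rightarrow> ('a \<Rightarrow> 'v \<Rightarrow> 'v) \<Rightarrow> ('a \<Rightarrow> 'v \<Rightarrow> 'v)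
   \<Rightarrow> (('v \<Rightarrow> 'v) \<times> ('a \<Rightarrow> 'a)) set"
  where "compat_pairs sA mA pA sV \<mu> l r = {(b, a). b \<in> lin_auts sV \<and> a \<in> com_prelie_auts sA mA pA \<and>
     (\<forall>x u. b (\<mu> x u) = \<mu> (a x) (b u) \<and> b (l x u) = l (a x) (b u) \<and> b (r x u) = r (a x) (b u))}"

definition is_coboundary ::
  "('k::field \<Rightarrow> 'a::ab_group_add \<Rightarrow> 'a) \<Rightarrow> ('a \<Rightarrow> 'a \<Rightarrow> 'a) \<Rightarrow> ('a \<Rightarrow> 'a \<Rightarrow> 'a)
   \<Rightarrow> ('k \<Rightarrow> 'v::ab_group_add \<Rightarrow> 'v) \<Rightarrow> ('a \<Rightarrow> 'v \<Rightarrow> 'v) \<Rightarrow> ('a \<Rightarrow> 'v \<Rightarrow> 'v) \<Rightarrow> ('a \<Rightarrow> 'v \<Rightarrow> 'v)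
   \<Rightarrow> ('a \<Rightarrow> 'a \<Rightarrow> 'v) \<Rightarrow> ('a \<Rightarrow> 'a \<Rightarrow> 'v) \<Rightarrow> bool"
  where "is_coboundary sA mA pA sV \<mu> l r \<phi> \<psi> \<longleftrightarrow>
     (\<exists>f. lin sA sV f \<and> (\<forall>x y. \<phi> x y = \<mu> x (f y) - f (mA x y) + \<mu> y (f x)
                                \<and> \<psi> x y = l x (f y) - f (pA x y) + r y (f x)))"

definition ext_phi :: "('v \<Rightarrow> 'h::ab_group_add) \<Rightarrow> ('a \<Rightarrow> 'h) \<Rightarrow> ('h \<Rightarrow> 'h \<Rightarrow> 'h) \<Rightarrow> ('a \<Rightarrow> 'a \<Rightarrow> 'a) \<Rightarrow> 'a \<Rightarrow> 'a \<Rightarrow> 'v"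
  where "ext_phi i s mH mA x y = inv i (mH (s x) (s y) - s (mA x y))"

definition ext_psi :: "('v \<Rightarrow> 'h::ab_group_add) \<Rightarrow> ('a \<Rightarrow> 'h) \<Rightarrow> ('h \<Rightarrow> 'h \<Rightarrow> 'h) \<Rightarrow> ('a \<Rightarrow> 'a \<Rightarrow> 'a) \<Rightarrow> 'a \<Rightarrow> 'a \<Rightarrow> 'v"
  where "ext_psi i s pH pA x y = inv i (pH (s x) (s y) - s (pA x y))"

text \<open>W(beta, alpha) = 0 in H^2(A,V): the difference (phi,psi)^(beta,alpha) - (phi,psi)
  is a 2-coboundary.\<close>
definition wells_zero ::
  "('k::field \<Rightarrow> 'a::ab_group_add \<Rightarrow> 'a) \<Rightarrow> ('a \<Rightarrow> 'a \<Rightarrow> 'a) \<Rightarrow> ('a \<Rightarrow> 'a \<Rightarrow> 'a)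
   \<Rightarrow> ('k \<Rightarrow> 'v::ab_group_add \<Rightarrow> 'v) \<Rightarrow> ('a \<Rightarrow> 'v \<Rightarrow> 'v) \<Rightarrow> ('a \<Rightarrow> 'v \<Rightarrow> 'v) \<Rightarrow> ('a \<Rightarrow> 'v \<Rightarrow> 'v)
   \<Rightarrow> ('h::ab_group_add \<Rightarrow> 'h \<Rightarrow> 'h) \<Rightarrow> ('h \<Rightarrow> 'h \<Rightarrow> 'h) \<Rightarrow> ('v \<Rightarrow> 'h) \<Rightarrow> ('a \<Rightarrow> 'h)
   \<Rightarrow> ('v \<Rightarrow> 'v) \<Rightarrow> ('a \<Rightarrow> 'a) \<Rightarrow> bool"
  where "wells_zero sA mA pA sV \<mu> l r mH pH i s b a \<longleftrightarrow>
     is_coboundary sA mA pA sV \<mu> l r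
       (\<lambda>x y. b (ext_phi i s mH mA (inv a x) (inv a y)) - ext_phi i s mH mA x y)
       (\<lambda>x y. b (ext_psi i s pH pA (inv a x) (inv a y)) - ext_psi i s pH pA x y)"

end

theory Submission
  imports Defs
begin


lemma lin_iff': "lin s1 s2 f \<longleftrightarrow> vector_space s1 \<and> vector_space s2 \<and> (\<forall>x y. f (x + y) = f x + f y) \<and> (\<forall>c x. f (s1 c x) = s2 c (f x))"
  unfolding lin_def by (rule Vector_Spaces.linear_iff)

lemma linD: assumes "lin s1 s2 f" shows "vector_space s1" "vector_space s2" "f (x+y) = f x + f y" "f (s1 c x) = s2 c (f x)"
  using assms by (auto simp: lin_iff')

lemma lin_0: assumes "lin s1 s2 f" shows "f 0 = 0"
proof -
  have "f (0+0) = f 0 + f 0" by (rule linD(3)[OF assms])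
  thus ?thesis by simp
qed

lemma lin_neg: assumes "lin s1 s2 f" shows "f (- x) = - f x"
proof -
  have "f x + f (-x) = 0" using linD(3)[OF assms, of x "-x"] lin_0[OF assms] by simp
  thus ?thesis by (simp add: add_eq_0_iff)
qed

lemma lin_diff: assumes "lin s1 s2 f" shows "f (x - y) = f x - f y"
  using linD(3)[OF assms, of x "-y"] lin_neg[OF assms, of y] by simp

lemma linI: "vector_space s1 \<Longrightarrow> vector_space s2 \<Longrightarrow> (\<And>x y. f (x + y) = f x + f y) \<Longrightarrow> (\<And>c x. f (s1 c x) = s2 c (f x)) \<Longrightarrow> lin s1 s2 f"
  by (simp add: lin_iff')

lemma lin_comp: "lin s1 s2 f \<Longrightarrow> lin s2 s3 g \<Longrightarrow> lin s1 s3 (\<lambda>x. g (f x))"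
  by (simp add: lin_iff')

lemma lin_idI: "vector_space s \<Longrightarrow> lin s s (\<lambda>x. x)"
  by (simp add: lin_iff')

lemma lin_plus: assumes "lin s1 s2 f" "lin s1 s2 g" shows "lin s1 s2 (\<lambda>x. f x + g x)"
proof -
  have v: "vector_space s2" using linD(2)[OF assms(1)] .
  show ?thesis using assms vector_space.vector_space_assms(1)[OF v]
    by (simp add: lin_iff' algebra_simps)
qed

lemma lin_minus: assumes "lin s1 s2 f" "lin s1 s2 g" shows "lin s1 s2 (\<lambda>x. f x - g x)"
proof -
  have v: "module s2" using linD(2)[OF assms(1)] by (simp add: module_iff_vector_space)
  show ?thesis using assms module.scale_right_diff_distrib[OF v]
    by (simp add: lin_iff' algebra_simps)
qed

lemma lin_inv: assumes "lin s1 s2 f" "bij f" shows "lin s2 s1 (inv f)"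
proof (rule linI)
  show "vector_space s1" "vector_space s2" using linD[OF assms(1)] by auto
  have fi: "\<And>y. f (inv f y) = y" using assms(2) by (simp add: bij_is_surj surj_f_inv_f)
  have inj: "inj f" using assms(2) bij_is_inj by blast
  fix x y c
  show "inv f (x + y) = inv f x + inv f y"
    by (rule injD[OF inj]) (simp add: fi linD(3)[OF assms(1)])
  show "inv f (s2 c x) = s1 c (inv f x)"
    by (rule injD[OF inj]) (simp add: fi linD(4)[OF assms(1)])
qed




locale ctx =
  fixes sA :: "'k::field_char_0 \<Rightarrow> 'a::ab_group_add \<Rightarrow> 'a"
    and mA pA :: "'a \<Rightarrow> 'a \<Rightarrow> 'a"
    and sV :: "'k \<Rightarrow> 'v::ab_group_add \<Rightarrow> 'v"
    and \<mu> l r :: "'a \<Rightarrow> 'v \<Rightarrow> 'v"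
    and sH :: "'k \<Rightarrow> 'h::ab_group_add \<Rightarrow> 'h"
    and mH pH :: "'h \<Rightarrow> 'h \<Rightarrow> 'h"
    and i :: "'v \<Rightarrow> 'h" and j :: "'h \<Rightarrow> 'a" and s :: "'a \<Rightarrow> 'h"
  assumes rep: "is_rep sA mA pA sV \<mu> l r"
    and ext: "abelian_extension sA mA pA sV sH mH pH i j"
    and ind: "induces_rep sA sH mH pH i j \<mu> l r"
    and sec: "lin_section sA sH j s"
begin

lemma vsA: "vector_space sA" and vsH: "vector_space sH" and vsV: "vector_space sV"
  using ext rep by (auto simp: abelian_extension_def com_prelie_def is_rep_def)

lemma lin_i: "lin sV sH i" and lin_j: "lin sH sA j" and lin_s: "lin sA sH s"
  using ext sec by (auto simp: abelian_extension_def com_prelie_hom_def lin_section_def)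

lemma js[simp]: "j (s x) = x" using sec by (simp add: lin_section_def)

lemma inj_i: "inj i" and surj_j: "surj j" and range_i: "range i = {h. j h = 0}"
  using ext by (auto simp: abelian_extension_def)

lemma i_add[simp]: "i (u + v) = i u + i v" by (rule linD(3)[OF lin_i])
lemma i_diff[simp]: "i (u - v) = i u - i v" by (rule lin_diff[OF lin_i])
lemma i_neg[simp]: "i (- u) = - i u" by (rule lin_neg[OF lin_i])
lemma i_0[simp]: "i 0 = 0" by (rule lin_0[OF lin_i])
lemma j_add[simp]: "j (u + v) = j u + j v" by (rule linD(3)[OF lin_j])
lemma j_diff[simp]: "j (u - v) = j u - j v" by (rule lin_diff[OF lin_j])
lemma j_neg[simp]: "j (- u) = - j u" by (rule lin_neg[OF lin_j])
lemma j_0[simp]: "j 0 = 0" by (rule lin_0[OF lin_j])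
lemma s_add[simp]: "s (u + v) = s u + s v" by (rule linD(3)[OF lin_s])
lemma s_diff[simp]: "s (u - v) = s u - s v" by (rule lin_diff[OF lin_s])
lemma s_neg[simp]: "s (- u) = - s u" by (rule lin_neg[OF lin_s])
lemma s_0[simp]: "s 0 = 0" by (rule lin_0[OF lin_s])

lemma i_eq_iff[simp]: "i u = i v \<longleftrightarrow> u = v" using inj_i by (auto dest: injD)
lemma i_eq_0_iff[simp]: "i u = 0 \<longleftrightarrow> u = 0" using i_eq_iff[of u 0] by simp

lemma ji[simp]: "j (i u) = 0" using range_i by auto
lemma iinv: "j z = 0 \<Longrightarrow> i (inv i z) = z"
  using range_i by (metis (mono_tags, lifting) f_inv_into_f mem_Collect_eq)
lemma inv_i[simp]: "inv i (i u) = u" using inj_i by simp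

lemma j_mul[simp]: "j (mH h k) = mA (j h) (j k)" and j_pl[simp]: "j (pH h k) = pA (j h) (j k)"
  using ext by (auto simp: abelian_extension_def com_prelie_hom_def)

lemma i_mul0[simp]: "mH (i u) (i v) = 0" and i_pl0[simp]: "pH (i u) (i v) = 0"
  using ext by (auto simp: abelian_extension_def com_prelie_hom_def)

lemma mH_comm: "mH h k = mH k h"
  using ext by (auto simp: abelian_extension_def com_prelie_def)

lemma lin_mHR: "lin sH sH (mH h)" and lin_mHL: "lin sH sH (\<lambda>k. mH k h)"
  and lin_pHR: "lin sH sH (pH h)" and lin_pHL: "lin sH sH (\<lambda>k. pH k h)"
  using ext by (auto simp: abelian_extension_def com_prelie_def bilin_def)

lemma mH_addR[simp]: "mH h (k1 + k2) = mH h k1 + mH h k2" by (rule linD(3)[OF lin_mHR])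
lemma mH_addL[simp]: "mH (k1 + k2) h = mH k1 h + mH k2 h" using linD(3)[OF lin_mHL] by simp
lemma mH_diffR[simp]: "mH h (k1 - k2) = mH h k1 - mH h k2" by (rule lin_diff[OF lin_mHR])
lemma mH_diffL[simp]: "mH (k1 - k2) h = mH k1 h - mH k2 h" using lin_diff[OF lin_mHL] by simp
lemma pH_addR[simp]: "pH h (k1 + k2) = pH h k1 + pH h k2" by (rule linD(3)[OF lin_pHR])
lemma pH_addL[simp]: "pH (k1 + k2) h = pH k1 h + pH k2 h" using linD(3)[OF lin_pHL] by simp
lemma pH_diffR[simp]: "pH h (k1 - k2) = pH h k1 - pH h k2" by (rule lin_diff[OF lin_pHR])
lemma pH_diffL[simp]: "pH (k1 - k2) h = pH k1 h - pH k2 h" using lin_diff[OF lin_pHL] by simp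

lemma lin_muR: "lin sV sV (\<mu> x)" and lin_lR: "lin sV sV (l x)" and lin_rR: "lin sV sV (r x)"
  and lin_muL: "lin sA sV (\<lambda>x. \<mu> x u)" and lin_lL: "lin sA sV (\<lambda>x. l x u)" and lin_rL: "lin sA sV (\<lambda>x. r x u)"
  using rep by (auto simp: is_rep_def bilin_def)

lemma mu_add[simp]: "\<mu> x (u + v) = \<mu> x u + \<mu> x v" by (rule linD(3)[OF lin_muR])
lemma l_add[simp]: "l x (u + v) = l x u + l x v" by (rule linD(3)[OF lin_lR])
lemma r_add[simp]: "r x (u + v) = r x u + r x v" by (rule linD(3)[OF lin_rR])
lemma mu_diff[simp]: "\<mu> x (u - v) = \<mu> x u - \<mu> x v" by (rule lin_diff[OF lin_muR])
lemma l_diff[simp]: "l x (u - v) = l x u - l x v" by (rule lin_diff[OF lin_lR])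
lemma r_diff[simp]: "r x (u - v) = r x u - r x v" by (rule lin_diff[OF lin_rR])
lemma mu_0L[simp]: "\<mu> 0 u = 0" using lin_0[OF lin_muL] by simp
lemma l_0L[simp]: "l 0 u = 0" using lin_0[OF lin_lL] by simp
lemma r_0L[simp]: "r 0 u = 0" using lin_0[OF lin_rL] by simp

lemma ind_mu: "mH (s x) (i u) = i (\<mu> x u)" and ind_l: "pH (s x) (i u) = i (l x u)"
  and ind_r: "pH (i u) (s x) = i (r x u)"
  using ind sec by (auto simp: induces_rep_def)

definition Pr :: "'h \<Rightarrow> 'v" where "Pr h = inv i (h - s (j h))"

lemma i_Pr: "i (Pr h) = h - s (j h)" unfolding Pr_def by (rule iinv) simp
lemma decomp: "h = s (j h) + i (Pr h)" by (simp add: i_Pr)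

lemma mH_i[simp]: "mH h (i u) = i (\<mu> (j h) u)"
proof -
  have "mH h (i u) = mH (s (j h) + i (Pr h)) (i u)" by (subst decomp[of h]) simp
  also have "\<dots> = i (\<mu> (j h) u)" by (simp add: ind_mu)
  finally show ?thesis .
qed
lemma mH_iL[simp]: "mH (i u) h = i (\<mu> (j h) u)" using mH_comm mH_i by metis
lemma pH_i[simp]: "pH h (i u) = i (l (j h) u)"
proof -
  have "pH h (i u) = pH (s (j h) + i (Pr h)) (i u)" by (subst decomp[of h]) simp
  also have "\<dots> = i (l (j h) u)" by (simp add: ind_l)
  finally show ?thesis .
qed
lemma pH_iL[simp]: "pH (i u) h = i (r (j h) u)"
proof -
  have "pH (i u) h = pH (i u) (s (j h) + i (Pr h))" by (subst decomp[of h]) simp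
  also have "\<dots> = i (r (j h) u)" by (simp add: ind_r)
  finally show ?thesis .
qed

lemma lin_via_i: assumes "lin sX sH G" "\<And>x. i (F x) = G x" shows "lin sX sV F"
proof (rule linI)
  show "vector_space sX" using linD(1)[OF assms(1)] .
  show "vector_space sV" by (rule vsV)
  fix x y c
  show "F (x + y) = F x + F y" using assms linD(3)[OF assms(1)] by (metis i_add i_eq_iff)
  show "F (sX c x) = sV c (F x)" using assms linD(4)[OF assms(1)] linD(4)[OF lin_i] by (metis i_eq_iff)
qed

lemma lin_Pr: "lin sH sV Pr"
  by (rule lin_via_i[OF _ i_Pr]) (intro lin_minus lin_idI vsH lin_comp[OF lin_j lin_s])

lemma Pr_i[simp]: "Pr (i u) = u" using i_Pr[of "i u"] by simp
lemma Pr_s[simp]: "Pr (s x) = 0" using i_Pr[of "s x"] by simp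

end


context ctx begin

lemma Z1D: assumes "N \<in> Z1 sA mA pA sV \<mu> l r"
  shows "lin sA sV N" "N (mA x y) = \<mu> x (N y) + \<mu> y (N x)" "N (pA x y) = l x (N y) + r y (N x)"
proof -
  show "lin sA sV N" using assms by (simp add: Z1_def)
  have "\<mu> x (N y) - N (mA x y) + \<mu> y (N x) = 0" using assms by (simp add: Z1_def)
  thus "N (mA x y) = \<mu> x (N y) + \<mu> y (N x)" by (simp add: algebra_simps eq_neg_iff_add_eq_0[symmetric] diff_eq_eq)
  have "l x (N y) - N (pA x y) + r y (N x) = 0" using assms by (simp add: Z1_def)
  thus "N (pA x y) = l x (N y) + r y (N x)" by (simp add: algebra_simps eq_neg_iff_add_eq_0[symmetric] diff_eq_eq)
qed

lemma Z1I: assumes "lin sA sV N" "\<And>x y. N (mA x y) = \<mu> x (N y) + \<mu> y (N x)" "\<And>x y. N (pA x y) = l x (N y) + r y (N x)"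
  shows "N \<in> Z1 sA mA pA sV \<mu> l r"
  using assms by (simp add: Z1_def)

lemma iota_mul: "iota i j N (mH h1 h2) - mH (iota i j N h1) (iota i j N h2)
   = i (N (mA (j h1) (j h2)) - \<mu> (j h1) (N (j h2)) - \<mu> (j h2) (N (j h1)))"
  by (simp add: iota_def algebra_simps)

lemma iota_pl: "iota i j N (pH h1 h2) - pH (iota i j N h1) (iota i j N h2)
   = i (N (pA (j h1) (j h2)) - l (j h1) (N (j h2)) - r (j h2) (N (j h1)))"
  by (simp add: iota_def algebra_simps)

lemma iota_lin: "lin sA sV N \<Longrightarrow> lin sH sH (iota i j N)"
  unfolding iota_def
  by (intro lin_plus lin_idI vsH lin_comp[OF lin_comp[OF lin_j] lin_i])

lemma j_iota[simp]: "j (iota i j N h) = j h" by (simp add: iota_def)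

lemma iota_bij: "bij (iota i j N)"
proof (rule bijI)
  show "inj (iota i j N)"
  proof (rule injI)
    fix x y assume e: "iota i j N x = iota i j N y"
    hence "j x = j y" by (metis j_iota)
    thus "x = y" using e by (simp add: iota_def)
  qed
  show "surj (iota i j N)"
  proof (rule surjI)
    fix h show "iota i j N (h - i (N (j h))) = h" by (simp add: iota_def)
  qed
qed

lemma iota_i[simp]: "lin sA sV N \<Longrightarrow> iota i j N (i u) = i u"
  by (simp add: iota_def lin_0)

lemma image_range_i: assumes "\<And>u. g (i u) = i (b u)" "surj b" shows "g ` range i = range i"
proof
  show "g ` range i \<subseteq> range i" using assms(1) by auto
  show "range i \<subseteq> g ` range i"
  proof
    fix h assume "h \<in> range i"
    then obtain w where w: "h = i w" by auto
    obtain u where "w = b u" using assms(2) by (metis surjD)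
    thus "h \<in> g ` range i" using w assms(1) by (metis rangeI image_eqI)
  qed
qed

lemma iota_in: assumes N: "N \<in> Z1 sA mA pA sV \<mu> l r"
  shows "iota i j N \<in> autVA sH mH pH i j s"
proof -
  note ND = Z1D[OF N]
  have m: "iota i j N (mH h1 h2) = mH (iota i j N h1) (iota i j N h2)" for h1 h2
    using iota_mul[of N h1 h2] ND(2) by simp
  have p: "iota i j N (pH h1 h2) = pH (iota i j N h1) (iota i j N h2)" for h1 h2
    using iota_pl[of N h1 h2] ND(3) by simp
  have im: "iota i j N ` range i = range i"
    by (rule image_range_i[where b=id]) (simp_all add: ND(1))
  have rv: "restrV i (iota i j N) = id" by (rule HOL.ext) (simp add: restrV_def ND(1))
  have js: "(\<lambda>x. j (iota i j N (s x))) = id" by (rule HOL.ext) simp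
  show ?thesis
    unfolding autVA_def autV_def com_prelie_auts_def com_prelie_hom_def
    using iota_lin[OF ND(1)] m p iota_bij im rv js by auto
qed

lemma iota_s: "iota i j N (s x) - s x = i (N x)" by (simp add: iota_def)

lemma autVD: assumes "g \<in> autV sH mH pH i"
  shows "lin sH sH g" "g (mH h k) = mH (g h) (g k)" "g (pH h k) = pH (g h) (g k)" "bij g"
    "g ` range i = range i"
  using assms by (auto simp: autV_def com_prelie_auts_def com_prelie_hom_def)

lemma autV_i: assumes "g \<in> autV sH mH pH i" shows "g (i u) = i (restrV i g u)"
proof -
  have "g (i u) \<in> range i" using autVD(5)[OF assms] by blast
  thus ?thesis unfolding restrV_def by (simp add: f_inv_into_f)
qed

lemma autV_j: assumes "g \<in> autV sH mH pH i" shows "j (g h) = j (g (s (j h)))"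
proof -
  have "g h = g (s (j h)) + g (i (Pr h))"
    by (subst decomp[of h]) (simp add: linD(3)[OF autVD(1)[OF assms]])
  thus ?thesis by (simp add: autV_i[OF assms])
qed

lemma autVA_ex: assumes g: "g \<in> autVA sH mH pH i j s"
  shows "\<exists>N \<in> Z1 sA mA pA sV \<mu> l r. g = iota i j N"
proof -
  have gV: "g \<in> autV sH mH pH i" and rv: "restrV i g = id" and js0: "(\<lambda>x. j (g (s x))) = id"
    using g by (auto simp: autVA_def)
  have gi: "g (i u) = i u" for u using autV_i[OF gV] rv by simp
  have jgs: "j (g (s x)) = x" for x using fun_cong[OF js0, of x] by simp
  define N where "N x = inv i (g (s x) - s x)" for x
  have iN: "i (N x) = g (s x) - s x" for x unfolding N_def by (rule iinv) (simp add: jgs)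
  note gl = autVD(1)[OF gV]
  have linN: "lin sA sV N"
    by (rule lin_via_i[OF _ iN]) (intro lin_minus lin_comp[OF lin_s gl] lin_s)
  have geq: "g = iota i j N"
  proof
    fix h
    have "g h = g (s (j h)) + g (i (Pr h))"
      by (subst decomp[of h]) (simp add: linD(3)[OF gl])
    also have "\<dots> = s (j h) + i (N (j h)) + i (Pr h)" by (simp add: gi iN)
    also have "\<dots> = iota i j N h" by (simp add: iota_def i_Pr)
    finally show "g h = iota i j N h" .
  qed
  have "N \<in> Z1 sA mA pA sV \<mu> l r"
  proof (rule Z1I[OF linN])
    fix x y
    have "i (N (mA x y) - \<mu> x (N y) - \<mu> y (N x)) = 0"
      using iota_mul[of N "s x" "s y"] autVD(2)[OF gV, of "s x" "s y"] geq by simp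
    hence "i (N (mA x y)) = i (\<mu> x (N y) + \<mu> y (N x))" by (simp add: algebra_simps)
    thus "N (mA x y) = \<mu> x (N y) + \<mu> y (N x)" by (metis i_eq_iff)
    have "i (N (pA x y) - l x (N y) - r y (N x)) = 0"
      using iota_pl[of N "s x" "s y"] autVD(3)[OF gV, of "s x" "s y"] geq by simp
    hence "i (N (pA x y)) = i (l x (N y) + r y (N x))" by (simp add: algebra_simps)
    thus "N (pA x y) = l x (N y) + r y (N x)" by (metis i_eq_iff)
  qed
  thus ?thesis using geq by blast
qed

lemma iota_add: "iota i j (\<lambda>x. N1 x + N2 x) = iota i j N1 \<circ> iota i j N2"
  by (rule HOL.ext) (simp add: iota_def algebra_simps)

lemma iota_inj: "inj_on (iota i j) X"
proof (rule inj_onI)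
  fix N1 N2 assume "iota i j N1 = iota i j N2"
  hence "i (N1 x) = i (N2 x)" for x using iota_s[of N1 x] iota_s[of N2 x] by metis
  thus "N1 = N2" by auto
qed

end


context ctx begin

lemma tau_C: assumes gV: "g \<in> autV sH mH pH i"
  shows "tau i j s g \<in> compat_pairs sA mA pA sV \<mu> l r"
proof -
  define b where "b = restrV i g"
  define a where "a = (\<lambda>x. j (g (s x)))"
  note gl = autVD(1)[OF gV] and gm = autVD(2)[OF gV] and gp = autVD(3)[OF gV]
    and gb = autVD(4)[OF gV] and gim = autVD(5)[OF gV]
  have gi: "g (i u) = i (b u)" for u unfolding b_def by (rule autV_i[OF gV])
  have ja: "j (g h) = a (j h)" for h unfolding a_def by (rule autV_j[OF gV])
  have g_add: "g (x + y) = g x + g y" for x y by (rule linD(3)[OF gl])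
  have g_diff: "g (x - y) = g x - g y" for x y by (rule lin_diff[OF gl])
  have ginj: "g x = g y \<Longrightarrow> x = y" for x y using gb by (auto dest: bij_is_inj injD)
  have linb: "lin sV sV b" by (rule lin_via_i[OF lin_comp[OF lin_i gl]]) (simp add: gi)
  have bb: "bij b"
  proof (rule bijI)
    show "inj b"
    proof (rule injI)
      fix u v assume "b u = b v"
      hence "g (i u) = g (i v)" by (simp add: gi)
      hence "i u = i v" by (rule ginj)
      thus "u = v" by simp
    qed
    show "surj b"
    proof (rule surjI)
      fix w
      have "i w \<in> g ` range i" using gim by auto
      then obtain u where "i w = g (i u)" by auto
      hence "b u = w" by (simp add: gi)
      thus "b (SOME u. b u = w) = w" by (rule someI)
    qed
  qed
  have lina: "lin sA sA a" unfolding a_def by (intro lin_comp[OF lin_comp[OF lin_s gl] lin_j])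
  have am: "a (mA x y) = mA (a x) (a y)" for x y
  proof -
    have "a (mA x y) = j (g (mH (s x) (s y)))" using ja[of "mH (s x) (s y)"] by simp
    thus ?thesis by (simp add: gm a_def)
  qed
  have ap: "a (pA x y) = pA (a x) (a y)" for x y
  proof -
    have "a (pA x y) = j (g (pH (s x) (s y)))" using ja[of "pH (s x) (s y)"] by simp
    thus ?thesis by (simp add: gp a_def)
  qed
  have ab: "bij a"
  proof (rule bijI)
    show "inj a"
    proof (rule injI)
      fix x y assume "a x = a y"
      hence "j (g (s x - s y)) = 0" by (simp add: g_diff a_def)
      hence "g (s x - s y) \<in> g ` range i" using gim range_i by auto
      then obtain u where "g (s x - s y) = g (i u)" by auto
      hence "s x - s y = i u" by (rule ginj)
      hence "j (s x - s y) = 0" by simp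
      thus "x = y" by simp
    qed
    show "surj a"
    proof (rule surjI)
      fix y
      obtain h where "g h = s y" using gb by (metis bij_is_surj surjD)
      hence "a (j h) = y" using ja[of h] by simp
      thus "a (SOME x. a x = y) = y" by (rule someI)
    qed
  qed
  have compat: "b (\<mu> x u) = \<mu> (a x) (b u) \<and> b (l x u) = l (a x) (b u) \<and> b (r x u) = r (a x) (b u)" for x u
  proof (intro conjI)
    have "i (b (\<mu> x u)) = g (mH (s x) (i u))" by (simp add: gi ind_mu)
    also have "\<dots> = i (\<mu> (a x) (b u))" by (simp only: gm gi) (simp add: a_def)
    finally show "b (\<mu> x u) = \<mu> (a x) (b u)" by (metis i_eq_iff)
    have "i (b (l x u)) = g (pH (s x) (i u))" by (simp add: gi ind_l)
    also have "\<dots> = i (l (a x) (b u))" by (simp only: gp gi) (simp add: a_def)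
    finally show "b (l x u) = l (a x) (b u)" by (metis i_eq_iff)
    have "i (b (r x u)) = g (pH (i u) (s x))" by (simp add: gi ind_r)
    also have "\<dots> = i (r (a x) (b u))" by (simp only: gp gi) (simp add: a_def)
    finally show "b (r x u) = r (a x) (b u)" by (metis i_eq_iff)
  qed
  show ?thesis
    unfolding compat_pairs_def tau_def lin_auts_def com_prelie_auts_def com_prelie_hom_def
    using linb bb lina am ap ab compat by (simp add: a_def b_def)
qed

lemma tau_comp: assumes g1: "g1 \<in> autV sH mH pH i" and g2: "g2 \<in> autV sH mH pH i"
  shows "tau i j s (g1 \<circ> g2) = (fst (tau i j s g1) \<circ> fst (tau i j s g2),
                                   snd (tau i j s g1) \<circ> snd (tau i j s g2))"
proof -
  have "restrV i (g1 \<circ> g2) = restrV i g1 \<circ> restrV i g2"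
  proof (rule HOL.ext)
    fix u
    have "g1 (g2 (i u)) = i (restrV i g1 (restrV i g2 u))" by (simp add: autV_i[OF g1] autV_i[OF g2])
    thus "restrV i (g1 \<circ> g2) u = (restrV i g1 \<circ> restrV i g2) u"
      by (simp add: restrV_def[of i "g1 \<circ> g2"])
  qed
  moreover have "j (g1 (g2 (s x))) = j (g1 (s (j (g2 (s x)))))" for x by (rule autV_j[OF g1])
  ultimately show ?thesis by (simp add: tau_def comp_def)
qed

end


context ctx begin

lemma i_phi[simp]: "i (ext_phi i s mH mA x y) = mH (s x) (s y) - s (mA x y)"
  unfolding ext_phi_def by (rule iinv) simp
lemma i_psi[simp]: "i (ext_psi i s pH pA x y) = pH (s x) (s y) - s (pA x y)"
  unfolding ext_psi_def by (rule iinv) simp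

lemma CD: assumes "(b, a) \<in> compat_pairs sA mA pA sV \<mu> l r"
  shows "lin sV sV b" "bij b" "lin sA sA a" "bij a" "a (mA x y) = mA (a x) (a y)" "a (pA x y) = pA (a x) (a y)"
    "b (\<mu> x u) = \<mu> (a x) (b u)" "b (l x u) = l (a x) (b u)" "b (r x u) = r (a x) (b u)"
  using assms by (auto simp: compat_pairs_def lin_auts_def com_prelie_auts_def com_prelie_hom_def)

lemma tau_wells: assumes gV: "g \<in> autV sH mH pH i"
  shows "wells_zero sA mA pA sV \<mu> l r mH pH i s (restrV i g) (\<lambda>x. j (g (s x)))"
proof -
  define b where "b = restrV i g"
  define a where "a = (\<lambda>x. j (g (s x)))"
  have C: "(b, a) \<in> compat_pairs sA mA pA sV \<mu> l r" using tau_C[OF gV] by (simp add: tau_def a_def b_def)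
  note gl = autVD(1)[OF gV] and gm = autVD(2)[OF gV] and gp = autVD(3)[OF gV]
  have gi: "g (i u) = i (b u)" for u unfolding b_def by (rule autV_i[OF gV])
  have g_diff: "g (x - y) = g x - g y" for x y by (rule lin_diff[OF gl])
  have ab: "bij a" and lina: "lin sA sA a" using CD[OF C] by auto
  have aa: "a (inv a x) = x" for x using ab by (simp add: bij_is_surj surj_f_inv_f)
  have ainj: "a x = a y \<Longrightarrow> x = y" for x y using ab by (auto dest: bij_is_inj injD)
  have am': "mA (inv a x) (inv a y) = inv a (mA x y)" for x y
    by (rule ainj) (simp add: CD(5)[OF C] aa)
  have ap': "pA (inv a x) (inv a y) = inv a (pA x y)" for x y
    by (rule ainj) (simp add: CD(6)[OF C] aa)
  define f where "f x = inv i (g (s (inv a x)) - s x)" for x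
  have iF: "i (f x) = g (s (inv a x)) - s x" for x unfolding f_def
    by (rule iinv) (use aa[of x] in \<open>simp add: a_def\<close>)
  have Gs: "g (s (inv a x)) = s x + i (f x)" for x by (simp add: iF)
  have linf: "lin sA sV f"
    by (rule lin_via_i[OF _ iF]) (intro lin_minus lin_comp[OF lin_comp[OF lin_inv[OF lina ab] lin_s] gl] lin_s)
  have phi: "b (ext_phi i s mH mA (inv a x) (inv a y)) - ext_phi i s mH mA x y = \<mu> x (f y) - f (mA x y) + \<mu> y (f x)" for x y
  proof -
    have "i (b (ext_phi i s mH mA (inv a x) (inv a y))) = g (i (ext_phi i s mH mA (inv a x) (inv a y)))"
      by (simp only: gi)
    also have "\<dots> = g (mH (s (inv a x)) (s (inv a y))) - g (s (inv a (mA x y)))"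
      by (simp add: am' g_diff del: mH_i mH_iL)
    also have "\<dots> = mH (s x + i (f x)) (s y + i (f y)) - (s (mA x y) + i (f (mA x y)))"
      by (simp only: gm Gs)
    finally have "i (b (ext_phi i s mH mA (inv a x) (inv a y))) = \<dots>" .
    hence "i (b (ext_phi i s mH mA (inv a x) (inv a y)) - ext_phi i s mH mA x y) = i (\<mu> x (f y) - f (mA x y) + \<mu> y (f x))"
      by (simp add: algebra_simps)
    thus ?thesis by (metis i_eq_iff)
  qed
  have psi: "b (ext_psi i s pH pA (inv a x) (inv a y)) - ext_psi i s pH pA x y = l x (f y) - f (pA x y) + r y (f x)" for x y
  proof -
    have "i (b (ext_psi i s pH pA (inv a x) (inv a y))) = g (i (ext_psi i s pH pA (inv a x) (inv a y)))"
      by (simp only: gi)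
    also have "\<dots> = g (pH (s (inv a x)) (s (inv a y))) - g (s (inv a (pA x y)))"
      by (simp add: ap' g_diff del: pH_i pH_iL)
    also have "\<dots> = pH (s x + i (f x)) (s y + i (f y)) - (s (pA x y) + i (f (pA x y)))"
      by (simp only: gp Gs)
    finally have "i (b (ext_psi i s pH pA (inv a x) (inv a y))) = \<dots>" .
    hence "i (b (ext_psi i s pH pA (inv a x) (inv a y)) - ext_psi i s pH pA x y) = i (l x (f y) - f (pA x y) + r y (f x))"
      by (simp add: algebra_simps)
    thus ?thesis by (metis i_eq_iff)
  qed
  show ?thesis unfolding wells_zero_def is_coboundary_def a_def[symmetric] b_def[symmetric]
    using linf phi psi by blast
qed

end


context ctx begin

lemma wells_sur: assumes C: "(b, a) \<in> compat_pairs sA mA pA sV \<mu> l r"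
  and W: "wells_zero sA mA pA sV \<mu> l r mH pH i s b a"
  shows "(b, a) \<in> tau i j s ` autV sH mH pH i"
proof -
  note linb = CD(1)[OF C] and bb = CD(2)[OF C] and lina = CD(3)[OF C] and ab = CD(4)[OF C]
    and am = CD(5)[OF C] and ap = CD(6)[OF C] and cmu = CD(7)[OF C] and cl = CD(8)[OF C] and cr = CD(9)[OF C]
  obtain f where linf: "lin sA sV f"
    and wphi: "\<And>x y. b (ext_phi i s mH mA (inv a x) (inv a y)) - ext_phi i s mH mA x y = \<mu> x (f y) - f (mA x y) + \<mu> y (f x)"
    and wpsi: "\<And>x y. b (ext_psi i s pH pA (inv a x) (inv a y)) - ext_psi i s pH pA x y = l x (f y) - f (pA x y) + r y (f x)"
    using W unfolding wells_zero_def is_coboundary_def by blast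
  have ai: "inv a (a x) = x" for x using ab by (simp add: bij_is_inj)
  have ainj: "a x = a y \<Longrightarrow> x = y" for x y using ab by (auto dest: bij_is_inj injD)
  have binj: "b x = b y \<Longrightarrow> x = y" for x y using bb by (auto dest: bij_is_inj injD)
  have aa: "a (inv a x) = x" for x using ab by (simp add: bij_is_surj surj_f_inv_f)
  have bbi: "b (inv b x) = x" for x using bb by (simp add: bij_is_surj surj_f_inv_f)
  have b_add: "b (u + v) = b u + b v" for u v by (rule linD(3)[OF linb])
  have a0: "a 0 = 0" by (rule lin_0[OF lina])
  have b0: "b 0 = 0" by (rule lin_0[OF linb])
  have f0: "f 0 = 0" by (rule lin_0[OF linf])
  have Wphi: "b (ext_phi i s mH mA x y) = ext_phi i s mH mA (a x) (a y) +
      (\<mu> (a x) (f (a y)) - f (mA (a x) (a y)) + \<mu> (a y) (f (a x)))" for x y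
    using wphi[of "a x" "a y"] unfolding ai by (metis add.commute diff_add_cancel)
  have Wpsi: "b (ext_psi i s pH pA x y) = ext_psi i s pH pA (a x) (a y) +
      (l (a x) (f (a y)) - f (pA (a x) (a y)) + r (a y) (f (a x)))" for x y
    using wpsi[of "a x" "a y"] unfolding ai by (metis add.commute diff_add_cancel)
  define g where "g h = s (a (j h)) + i (f (a (j h))) + i (b (Pr h))" for h
  have g_dec: "g (s x + i u) = s (a x) + i (f (a x)) + i (b u)" for x u
    by (simp add: g_def linD(3)[OF lin_Pr])
  have gj: "j (g h) = a (j h)" for h by (simp add: g_def)
  have gi: "g (i u) = i (b u)" for u using g_dec[of 0 u] by (simp add: a0 f0)
  have gs: "g (s x) = s (a x) + i (f (a x))" for x using g_dec[of x 0] by (simp add: b0)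
  have lg: "lin sH sH g"
  proof -
    have l1: "lin sH sH (\<lambda>h. s (a (j h)))" by (rule lin_comp[OF lin_comp[OF lin_j lina] lin_s])
    have l2: "lin sH sH (\<lambda>h. i (f (a (j h))))" by (rule lin_comp[OF lin_comp[OF lin_comp[OF lin_j lina] linf] lin_i])
    have l3: "lin sH sH (\<lambda>h. i (b (Pr h)))" by (rule lin_comp[OF lin_comp[OF lin_Pr linb] lin_i])
    have "lin sH sH (\<lambda>h. (s (a (j h)) + i (f (a (j h)))) + i (b (Pr h)))"
      by (rule lin_plus[OF lin_plus[OF l1 l2] l3])
    thus ?thesis unfolding g_def[abs_def] .
  qed
  have gb: "bij g"
  proof (rule bijI)
    show "inj g"
    proof (rule injI)
      fix h1 h2 assume e: "g h1 = g h2"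
      hence "a (j h1) = a (j h2)" by (metis gj)
      hence jj: "j h1 = j h2" by (rule ainj)
      hence "i (b (Pr h1)) = i (b (Pr h2))" using e by (simp add: g_def)
      hence "Pr h1 = Pr h2" using binj by simp
      thus "h1 = h2" using jj decomp by metis
    qed
    show "surj g"
    proof (rule surjI)
      fix h'
      define x where "x = inv a (j h')"
      define w where "w = inv i (h' - s (j h') - i (f (j h')))"
      have iw: "i w = h' - s (j h') - i (f (j h'))" unfolding w_def by (rule iinv) simp
      have "g (s x + i (inv b w)) = h'"
        unfolding g_dec by (simp add: x_def aa bbi iw)
      thus "g (SOME h. g h = h') = h'" by (rule someI)
    qed
  qed
  have gim: "g ` range i = range i" by (rule image_range_i[OF gi bij_is_surj[OF bb]])
  have gmul4: "g (mH (s x + i u) (s y + i v)) = mH (g (s x + i u)) (g (s y + i v))" for x u y v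
  proof -
    have e1: "mH (s x + i u) (s y + i v) = s (mA x y) + i (ext_phi i s mH mA x y + \<mu> x v + \<mu> y u)"
      by (simp add: algebra_simps)
    have "i (b (ext_phi i s mH mA x y)) = i (ext_phi i s mH mA (a x) (a y) +
      (\<mu> (a x) (f (a y)) - f (mA (a x) (a y)) + \<mu> (a y) (f (a x))))" by (simp only: Wphi)
    hence e2: "i (b (ext_phi i s mH mA x y)) = mH (s (a x)) (s (a y)) - s (mA (a x) (a y)) +
      (i (\<mu> (a x) (f (a y))) - i (f (mA (a x) (a y))) + i (\<mu> (a y) (f (a x))))" by simp
    show ?thesis unfolding e1 g_dec
      by (simp add: b_add cmu am e2 algebra_simps del: mH_i mH_iL) (simp add: algebra_simps)
  qed
  have gpl4: "g (pH (s x + i u) (s y + i v)) = pH (g (s x + i u)) (g (s y + i v))" for x u y v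
  proof -
    have e1: "pH (s x + i u) (s y + i v) = s (pA x y) + i (ext_psi i s pH pA x y + l x v + r y u)"
      by (simp add: algebra_simps)
    have "i (b (ext_psi i s pH pA x y)) = i (ext_psi i s pH pA (a x) (a y) +
      (l (a x) (f (a y)) - f (pA (a x) (a y)) + r (a y) (f (a x))))" by (simp only: Wpsi)
    hence e2: "i (b (ext_psi i s pH pA x y)) = pH (s (a x)) (s (a y)) - s (pA (a x) (a y)) +
      (i (l (a x) (f (a y))) - i (f (pA (a x) (a y))) + i (r (a y) (f (a x))))" by simp
    show ?thesis unfolding e1 g_dec
      by (simp add: b_add cl cr ap e2 algebra_simps del: pH_i pH_iL) (simp add: algebra_simps)
  qed
  have gm: "g (mH h k) = mH (g h) (g k)" for h k
    using gmul4[of "j h" "Pr h" "j k" "Pr k"] decomp[symmetric, of h] decomp[symmetric, of k] by simp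
  have gp: "g (pH h k) = pH (g h) (g k)" for h k
    using gpl4[of "j h" "Pr h" "j k" "Pr k"] decomp[symmetric, of h] decomp[symmetric, of k] by simp
  have gV: "g \<in> autV sH mH pH i"
    unfolding autV_def com_prelie_auts_def com_prelie_hom_def using lg gm gp gb gim by auto
  have "tau i j s g = (b, a)"
  proof -
    have "restrV i g = b" by (rule HOL.ext) (simp add: restrV_def gi)
    moreover have "(\<lambda>x. j (g (s x))) = a" by (rule HOL.ext) (simp add: gj)
    ultimately show ?thesis by (simp add: tau_def)
  qed
  thus ?thesis using gV by (metis image_eqI)
qed

end


theorem theorem5p2:
  fixes sA :: "'k::field_char_0 \<Rightarrow> 'a::ab_group_add \<Rightarrow> 'a"
    and mA pA :: "'a \<Rightarrow> 'a \<Rightarrow> 'a"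
    and sV :: "'k \<Rightarrow> 'v::ab_group_add \<Rightarrow> 'v"
    and \<mu> l r :: "'a \<Rightarrow> 'v \<Rightarrow> 'v"
    and sH :: "'k \<Rightarrow> 'h::ab_group_add \<Rightarrow> 'h"
    and mH pH :: "'h \<Rightarrow> 'h \<Rightarrow> 'h"
    and i :: "'v \<Rightarrow> 'h" and j :: "'h \<Rightarrow> 'a" and s :: "'a \<Rightarrow> 'h"
  assumes rep: "is_rep sA mA pA sV \<mu> l r"
    and ext: "abelian_extension sA mA pA sV sH mH pH i j"
    and ind: "induces_rep sA sH mH pH i j \<mu> l r"
    and sec: "lin_section sA sH j s"
  shows
    \<comment> \<open>iota is the inverse of the isomorphism Aut^A_V(Ahat) -> Z^1(A,V), gamma |-> gamma s - s\<close>
    "(\<forall>N \<in> Z1 sA mA pA sV \<mu> l r. iota i j N \<in> autVA sH mH pH i j s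
                                 \<and> (\<forall>x. iota i j N (s x) - s x = i (N x)))
     \<and> (\<forall>g \<in> autVA sH mH pH i j s. \<exists>N \<in> Z1 sA mA pA sV \<mu> l r. g = iota i j N)
     \<and> (\<forall>N1 \<in> Z1 sA mA pA sV \<mu> l r. \<forall>N2 \<in> Z1 sA mA pA sV \<mu> l r.
          iota i j (\<lambda>x. N1 x + N2 x) = iota i j N1 \<circ> iota i j N2)
     \<comment> \<open>exactness at Z^1: iota injective\<close>
     \<and> inj_on (iota i j) (Z1 sA mA pA sV \<mu> l r)
     \<comment> \<open>tau is a group homomorphism with values in C\<close>
     \<and> (\<forall>g \<in> autV sH mH pH i. tau i j s g \<in> compat_pairs sA mA pA sV \<mu> l r)
     \<and> (\<forall>g1 \<in> autV sH mH pH i. \<forall>g2 \<in> autV sH mH pH i.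
          tau i j s (g1 \<circ> g2) = (fst (tau i j s g1) \<circ> fst (tau i j s g2),
                                   snd (tau i j s g1) \<circ> snd (tau i j s g2)))
     \<comment> \<open>exactness at Aut_V(Ahat): ker tau = image of iota\<close>
     \<and> {g \<in> autV sH mH pH i. tau i j s g = (id, id)} = iota i j ` Z1 sA mA pA sV \<mu> l r
     \<comment> \<open>exactness at C: image of tau = kernel of the Wells map\<close>
     \<and> tau i j s ` autV sH mH pH i
         = {(b, a) \<in> compat_pairs sA mA pA sV \<mu> l r. wells_zero sA mA pA sV \<mu> l r mH pH i s b a}"
  proof -
  interpret ctx sA mA pA sV \<mu> l r sH mH pH i j s
    using rep ext ind sec by (rule ctx.intro)
  have k: "{g \<in> autV sH mH pH i. tau i j s g = (id, id)} = autVA sH mH pH i j s"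
    by (auto simp: autVA_def tau_def)
  have k2: "autVA sH mH pH i j s = iota i j ` Z1 sA mA pA sV \<mu> l r"
    using iota_in autVA_ex by blast
  have w1: "tau i j s ` autV sH mH pH i \<subseteq> {(b, a) \<in> compat_pairs sA mA pA sV \<mu> l r. wells_zero sA mA pA sV \<mu> l r mH pH i s b a}"
  proof
    fix p assume "p \<in> tau i j s ` autV sH mH pH i"
    then obtain g where g: "g \<in> autV sH mH pH i" "p = tau i j s g" by blast
    show "p \<in> {(b, a) \<in> compat_pairs sA mA pA sV \<mu> l r. wells_zero sA mA pA sV \<mu> l r mH pH i s b a}"
      using tau_C[OF g(1)] tau_wells[OF g(1)] g(2) by (simp add: tau_def)
  qed
  have w2: "{(b, a) \<in> compat_pairs sA mA pA sV \<mu> l r. wells_zero sA mA pA sV \<mu> l r mH pH i s b a} \<subseteq> tau i j s ` autV sH mH pH i"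
    using wells_sur by blast
  show ?thesis
    using iota_in iota_s autVA_ex iota_add iota_inj tau_C tau_comp k k2 w1 w2 by blast
qed

end
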